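(* Let $m,d$ be natural numbers with $d\geqslant m+1$ and $c,C$ positive constants. For a natural number $N$, let $L=L(N):\mathbb{R}^d\to\mathbb{R}^m$ be a surjective linear map with matrix $(\lambda_{ij})_{i\leqslant m,j\leqslant d}$, and assume $\Vert L\Vert_\infty\leqslant C$ and $\operatorname{dist}(L,V_{\mathrm{rank}}(m,d))\geqslant c$. Then there exists an $m\times m$ submatrix $M$ of $L$ with (1) $|\det M|=\Omega_{c,C}(1)$ and (2) $\Vert M^{-1}\Vert_\infty=O_{c,C}(1)$ (such $M$ is called a rank matrix of $L$). Furthermore: (3) if $\mathbf v\in\mathbb{R}^d$ is such that $\mathbf v^T$ lies in the row space of $L$ and $\Vert\mathbf v\Vert_\infty\leqslant C_1$ for some constant $C_1>0$, then there exist coefficients $a_1,\dots,a_m$ with $|a_i|=O_{c,C,C_1}(1)$ such that $\sum_{i=1}^m a_i\lambda_{ij}=v_j$ for all $1\leqslant j\leqslant d$; and (4) if $L$ satisfies the stronger hypothesis $\operatorname{dist}(L,V^{\mathrm{gbl}}_{\mathrm{rank}}(m,d))\geqslant c$, then for each $j$ there is a rank matrix of $L$ not containing the $j$-th column of $L$.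
   Context: $\Vert\cdot\Vert_\infty$ is the maximum absolute value of matrix entries; $\operatorname{dist}$ is the $\ell^\infty$ distance on entries. $V_{\mathrm{rank}}(m,d)$ is the set of $m\times d$ real matrices of rank $<m$. $V^{\mathrm{gbl}}_{\mathrm{rank}}(m,d)$ is the set of linear maps $L:\mathbb{R}^d\to\mathbb{R}^m$ for which there is a standard basis vector $\mathbf e_i$ such that $L$ restricted to $\mathrm{span}(\mathbf e_j:j\neq i)$ has rank $<m$. $O_{c,C}(1)$ (resp. $\Omega_{c,C}(1)$) denotes a quantity bounded above (resp. below by a positive quantity) by a constant depending only on $c,C,m,d$; in (3) the constant may also depend on $C_1$. *)

theory Defs
  imports "HOL-Analysis.Analysis"
begin

definition mat_maxnorm :: "real^'n^'m \<Rightarrow> real" where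
  "mat_maxnorm A = Max {\<bar>A $ i $ j\<bar> | i j. True}"

definition vec_maxnorm :: "real^'n \<Rightarrow> real" where
  "vec_maxnorm v = Max {\<bar>v $ j\<bar> | j. True}"

definition mat_dist_set :: "real^'n^'m \<Rightarrow> (real^'n^'m) set \<Rightarrow> real" where
  "mat_dist_set L S = Inf {mat_maxnorm (L - B) | B. B \<in> S}"

definition V_rank :: "(real^'d^'m) set" where
  "V_rank = {B. rank B < CARD('m)}"

definition V_rank_gbl :: "(real^'d^'m) set" where
  "V_rank_gbl = {B. \<exists>i::'d. dim ((\<lambda>x. B *v x) ` span {axis j 1 | j. j \<noteq> i}) < CARD('m)}"

definition col_submatrix :: "real^'d^'m \<Rightarrow> ('m \<Rightarrow> 'd) \<Rightarrow> real^'m^'m" where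
  "col_submatrix L \<sigma> = (\<chi> i k. L $ i $ (\<sigma> k))"

definition is_rank_matrix :: "real \<Rightarrow> real \<Rightarrow> real^'d^'m \<Rightarrow> ('m \<Rightarrow> 'd) \<Rightarrow> bool" where
  "is_rank_matrix \<delta> K L \<sigma> \<longleftrightarrow> inj \<sigma> \<and>
     \<bar>det (col_submatrix L \<sigma>)\<bar> \<ge> \<delta> \<and>
     mat_maxnorm (matrix_inv (col_submatrix L \<sigma>)) \<le> K"

end

theory Submission
  imports Defs
begin

lemma column_col_submatrix: "column k (col_submatrix L \<sigma>) = column (\<sigma> k) L"
  by (simp add: col_submatrix_def column_def)

lemma lemA:
  fixes L :: "real^'d^'m" and J :: "'d set"
  assumes "dim ((\<lambda>x. L *v x) ` span {axis j 1 | j. j \<in> J}) \<ge> CARD('m)"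
  shows "\<exists>\<sigma>. inj \<sigma> \<and> range \<sigma> \<subseteq> J \<and> det (col_submatrix L \<sigma>) \<noteq> 0"
proof -
  define T where "T = {column j L | j. j \<in> J}"
  have lin: "linear (\<lambda>x. L *v x)" by (simp add: matrix_vector_mul_linear)
  have img: "(\<lambda>x. L *v x) ` {axis j 1 | j. j \<in> J} = T"
    unfolding T_def
  proof (intro equalityI subsetI)
    fix y assume "y \<in> (\<lambda>x. L *v x) ` {axis j 1 | j. j \<in> J}"
    then obtain j where "j \<in> J" "y = L *v axis j 1" by blast
    thus "y \<in> {column j L | j. j \<in> J}" by (auto simp: matrix_vector_mult_basis)
  next
    fix y assume "y \<in> {column j L | j. j \<in> J}"
    then obtain j where j: "j \<in> J" "y = column j L" by blast
    hence "y = L *v axis j 1" by (simp add: matrix_vector_mult_basis)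
    thus "y \<in> (\<lambda>x. L *v x) ` {axis j 1 | j. j \<in> J}" using j by blast
  qed
  have eqs: "(\<lambda>x. L *v x) ` span {axis j 1 | j. j \<in> J} = span T"
    unfolding img[symmetric] by (rule linear_span_image[OF lin, symmetric])
  have d1: "dim T \<ge> CARD('m)" using assms unfolding eqs dim_span .
  have d2: "dim T \<le> CARD('m)" by (rule dim_subset_UNIV_cart)
  have "dim T = DIM(real^'m)" using d1 d2 by simp
  hence spT: "span T = UNIV" by (simp only: dim_eq_full)
  obtain B where B: "B \<subseteq> T" "independent B" "T \<subseteq> span B"
    using maximal_independent_subset by blast
  have "span T \<subseteq> span B" using B(3) by (simp add: span_minimal subspace_span)
  hence "span B = UNIV" using spT by auto
  hence "dim B = DIM(real^'m)" using dim_eq_full by blast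
  hence "dim B = CARD('m)" by simp
  hence cB: "card B = CARD('m)" using dim_eq_card_independent[OF B(2)] by simp
  have fB: "finite B" using B(2) finiteI_independent by blast
  obtain g where g: "bij_betw g (UNIV::'m set) B"
    using finite_same_card_bij[of "UNIV::'m set" B] fB cB by auto
  have "\<forall>b\<in>B. \<exists>j. j \<in> J \<and> column j L = b" using B(1) unfolding T_def by auto
  then obtain jf where jf: "\<And>b. b \<in> B \<Longrightarrow> jf b \<in> J \<and> column (jf b) L = b" by metis
  define \<sigma> where "\<sigma> = jf \<circ> g"
  have gB: "g k \<in> B" for k using g bij_betwE by blast
  have colk: "column (\<sigma> k) L = g k" for k using jf gB by (simp add: \<sigma>_def)
  have "inj \<sigma>"
  proof
    fix x y assume "\<sigma> x = \<sigma> y"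
    hence "g x = g y" using colk by metis
    thus "x = y" using g by (metis bij_betw_def inj_def)
  qed
  moreover have "range \<sigma> \<subseteq> J" using jf gB by (auto simp: \<sigma>_def)
  moreover have "det (col_submatrix L \<sigma>) \<noteq> 0"
  proof -
    have "columns (col_submatrix L \<sigma>) = B"
      using g colk by (auto simp: columns_def column_col_submatrix bij_betw_def)
    hence "vec.span (columns (col_submatrix L \<sigma>)) = UNIV"
      using \<open>span B = UNIV\<close> by (simp add: span_vec_eq)
    hence "invertible (col_submatrix L \<sigma>)"
      using matrix_right_invertible_span_columns invertible_right_inverse by blast
    thus ?thesis using invertible_det_nz by blast
  qed
  ultimately show ?thesis by blast
qed

lemma cont_det_sub: "continuous_on S (\<lambda>L::real^'d^'m. det (col_submatrix L \<sigma>))"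
proof -
  have eq: "(\<lambda>L::real^'d^'m. det (col_submatrix L \<sigma>)) =
    (\<lambda>L. \<Sum>p\<in>{p. p permutes (UNIV::'m set)}. of_int (sign p) * (\<Prod>i\<in>UNIV. L $ i $ \<sigma> (p i)))"
    by (simp add: det_def col_submatrix_def)
  show ?thesis unfolding eq
    by (intro continuous_on_sum continuous_on_mult continuous_on_const continuous_on_prod
        continuous_on_component continuous_on_id)
qed

lemma lemB:
  fixes S :: "(real^'d^'m) set" and \<Sigma> :: "('m \<Rightarrow> 'd) set"
  assumes cS: "compact S" and pos: "\<forall>L\<in>S. \<exists>\<sigma>\<in>\<Sigma>. det (col_submatrix L \<sigma>) \<noteq> 0"
  shows "\<exists>\<delta>>0. \<forall>L\<in>S. \<exists>\<sigma>\<in>\<Sigma>. \<bar>det (col_submatrix L \<sigma>)\<bar> \<ge> \<delta>"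
proof (cases "S = {}")
  case True thus ?thesis by (intro exI[of _ 1]) auto
next
  case False
  define F where "F = (\<lambda>L::real^'d^'m. \<Sum>\<sigma>\<in>\<Sigma>. (det (col_submatrix L \<sigma>))^2)"
  have fin: "finite \<Sigma>" by simp
  have "continuous_on S F" unfolding F_def
    by (intro continuous_intros cont_det_sub)
  then obtain L0 where L0: "L0 \<in> S" "\<And>L. L \<in> S \<Longrightarrow> F L0 \<le> F L"
    using continuous_attains_inf[OF cS False] by blast
  obtain \<tau> where \<tau>: "\<tau> \<in> \<Sigma>" "det (col_submatrix L0 \<tau>) \<noteq> 0" using pos L0 by blast
  have "F L0 > 0" unfolding F_def
    by (rule sum_pos2[OF fin \<tau>(1)]) (use \<tau> in auto)
  define N where "N = real (card \<Sigma>)"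
  have ne: "\<Sigma> \<noteq> {}" using \<tau>(1) by blast
  have cpos: "card \<Sigma> > 0" by (rule card_gt_0_iff[THEN iffD2, OF conjI[OF ne fin]])
  have N: "N > 0" unfolding N_def using cpos by (simp only: of_nat_0_less_iff)
  have q: "F L0 / N > 0" using N \<open>F L0 > 0\<close> by (rule divide_pos_pos[rotated])
  define \<delta> where "\<delta> = sqrt (F L0 / N)"
  have dpos: "\<delta> > 0" unfolding \<delta>_def using q by (rule real_sqrt_gt_zero)
  have dsq: "\<delta>^2 = F L0 / N" unfolding \<delta>_def using q by (intro real_sqrt_pow2) (rule less_imp_le)
  have "\<exists>\<sigma>\<in>\<Sigma>. \<bar>det (col_submatrix L \<sigma>)\<bar> \<ge> \<delta>" if L: "L \<in> S" for L
  proof (rule ccontr)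
    assume "\<not> ?thesis"
    hence lt: "\<forall>\<sigma>\<in>\<Sigma>. \<bar>det (col_submatrix L \<sigma>)\<bar> < \<delta>" by auto
    have lt2: "(det (col_submatrix L \<sigma>))^2 < F L0 / N" if s: "\<sigma> \<in> \<Sigma>" for \<sigma>
    proof -
      have "\<bar>det (col_submatrix L \<sigma>)\<bar> < \<delta>" using lt s by blast
      hence "\<bar>det (col_submatrix L \<sigma>)\<bar>^2 < \<delta>^2"
        by (rule power_strict_mono) simp_all
      thus ?thesis unfolding dsq power2_abs .
    qed
    have Fs: "F L = (\<Sum>\<sigma>\<in>\<Sigma>. (det (col_submatrix L \<sigma>))^2)" unfolding F_def by (rule refl)
    have "F L < (\<Sum>\<sigma>\<in>\<Sigma>. F L0 / N)" unfolding Fs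
      by (rule sum_strict_mono[OF fin ne lt2])
    also have "\<dots> = N * (F L0 / N)" by (simp only: sum_constant N_def)
    also have "\<dots> = F L0" using N by simp
    finally show False using L0(2)[OF L] by linarith
  qed
  with dpos show ?thesis by blast
qed

lemma maxnorm_le_iff: "mat_maxnorm (A::real^'n^'m) \<le> K \<longleftrightarrow> (\<forall>i j. \<bar>A$i$j\<bar> \<le> K)"
proof -
  have eq: "{\<bar>A $ i $ j\<bar> | i j. True} = (\<lambda>(i,j). \<bar>A $ i $ j\<bar>) ` UNIV" by auto
  show ?thesis unfolding mat_maxnorm_def eq
    by (subst Max_le_iff) auto
qed

lemma vmaxnorm_le_iff: "vec_maxnorm (v::real^'n) \<le> K \<longleftrightarrow> (\<forall>j. \<bar>v$j\<bar> \<le> K)"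
proof -
  have eq: "{\<bar>v $ j\<bar> | j. True} = (\<lambda>j. \<bar>v $ j\<bar>) ` UNIV" by auto
  show ?thesis unfolding vec_maxnorm_def eq
    by (subst Max_le_iff) auto
qed

lemma maxnorm_ge_iff: "K \<le> mat_maxnorm (A::real^'n^'m) \<longleftrightarrow> (\<exists>i j. K \<le> \<bar>A$i$j\<bar>)"
proof -
  have eq: "{\<bar>A $ i $ j\<bar> | i j. True} = (\<lambda>(i,j). \<bar>A $ i $ j\<bar>) ` UNIV" by auto
  show ?thesis unfolding mat_maxnorm_def eq
    by (subst Max_ge_iff) auto
qed

lemma maxnorm_nonneg: "0 \<le> mat_maxnorm (A::real^'n^'m)"
  using maxnorm_ge_iff[of 0 A] by auto

lemma det_bound:
  fixes A :: "real^'n^'n"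
  assumes "\<forall>i j. \<bar>A$i$j\<bar> \<le> B"
  shows "\<bar>det A\<bar> \<le> fact CARD('n) * B ^ CARD('n)"
proof -
  have "\<bar>det A\<bar> \<le> (\<Sum>p\<in>{p. p permutes (UNIV::'n set)}. \<bar>of_int (sign p) * (\<Prod>i\<in>UNIV. A $ i $ p i)\<bar>)"
    unfolding det_def by (rule sum_abs)
  also have "\<dots> \<le> (\<Sum>p\<in>{p. p permutes (UNIV::'n set)}. B ^ CARD('n))"
  proof (rule sum_mono)
    fix p assume "p \<in> {p. p permutes (UNIV::'n set)}"
    have "\<bar>of_int (sign p) * (\<Prod>i\<in>UNIV. A $ i $ p i)\<bar> = (\<Prod>i\<in>UNIV. \<bar>A $ i $ p i\<bar>)"
      by (simp add: abs_mult sign_def abs_prod)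
    also have "\<dots> \<le> (\<Prod>i\<in>(UNIV::'n set). B)"
      by (rule prod_mono) (use assms in auto)
    finally show "\<bar>of_int (sign p) * (\<Prod>i\<in>UNIV. A $ i $ p i)\<bar> \<le> B ^ CARD('n)" by simp
  qed
  also have "\<dots> = fact CARD('n) * B ^ CARD('n)"
    by (simp add: card_permutations)
  finally show ?thesis .
qed

lemma inv_right:
  fixes M :: "real^'m^'m"
  assumes "invertible M"
  shows "M ** matrix_inv M = mat 1"
proof -
  have "\<exists>A'::real^'m^'m. M ** A' = mat 1 \<and> A' ** M = mat 1"
    using assms unfolding invertible_def .
  hence "M ** matrix_inv M = mat 1 \<and> matrix_inv M ** M = mat 1"
    unfolding matrix_inv_def by (rule someI_ex)
  thus ?thesis by (rule conjunct1)
qed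

lemma inv_bound:
  fixes M :: "real^'m^'m"
  assumes d: "\<bar>det M\<bar> \<ge> \<delta>" "\<delta> > 0" and e: "\<forall>i j. \<bar>M$i$j\<bar> \<le> B" and B: "B \<ge> 1"
  shows "mat_maxnorm (matrix_inv M) \<le> fact CARD('m) * B ^ CARD('m) / \<delta>"
  unfolding maxnorm_le_iff
proof (intro allI)
  fix i k
  have dnz: "det M \<noteq> 0" using d by auto
  hence "invertible M" using invertible_det_nz by blast
  hence MI: "M ** matrix_inv M = mat 1" by (rule inv_right)
  define x where "x = column k (matrix_inv M)"
  define b where "b = (\<chi> a. (mat 1 :: real^'m^'m) $ a $ k)"
  have "M *v x = b"
    using MI unfolding x_def b_def
    by (simp add: vec_eq_iff matrix_vector_mult_def matrix_matrix_mult_def column_def)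
  hence xe: "x = (\<chi> k. det(\<chi> i j. if j=k then b$i else M$i$j) / det M)"
    using cramer[OF dnz] by blast
  have bb: "\<forall>a c. \<bar>(\<chi> i j. if j=i' then b$i else M$i$j) $ a $ c\<bar> \<le> B" for i'
    using e B by (auto simp: b_def mat_def)
  have "\<bar>matrix_inv M $ i $ k\<bar> = \<bar>x $ i\<bar>" by (simp add: x_def column_def)
  also have "\<dots> = \<bar>det(\<chi> i' j. if j=i then b$i' else M$i'$j)\<bar> / \<bar>det M\<bar>"
    by (subst xe) (simp add: abs_divide)
  also have "\<dots> \<le> fact CARD('m) * B ^ CARD('m) / \<delta>"
    by (rule frac_le) (use det_bound[OF bb] d B in auto)
  finally show "\<bar>matrix_inv M $ i $ k\<bar> \<le> fact CARD('m) * B ^ CARD('m) / \<delta>" .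
qed

lemma dist_le:
  assumes "mat_dist_set L T \<ge> c" "B \<in> T"
  shows "c \<le> mat_maxnorm (L - B)"
proof -
  have "Inf {mat_maxnorm (L - B) | B. B \<in> T} \<le> mat_maxnorm (L - B)"
    by (rule cInf_lower) (use assms(2) maxnorm_nonneg in \<open>auto intro!: bdd_belowI[of _ 0]\<close>)
  thus ?thesis using assms(1) unfolding mat_dist_set_def by linarith
qed

lemma not_in_dist:
  assumes "c > 0" "mat_dist_set L T \<ge> c"
  shows "L \<notin> T"
proof
  assume "L \<in> T"
  hence "c \<le> mat_maxnorm (L - L)" using dist_le assms by blast
  moreover have "mat_maxnorm (L - L) \<le> 0" by (simp add: maxnorm_le_iff)
  ultimately show False using assms by linarith
qed

lemma closed_far:
  "closed {L::real^'d^'m. \<forall>B\<in>T. c \<le> mat_maxnorm (L - B)}"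
proof -
  have eq: "{L::real^'d^'m. \<forall>B\<in>T. c \<le> mat_maxnorm (L - B)} =
     (\<Inter>B\<in>T. \<Union>p\<in>UNIV. {L. c \<le> \<bar>L $ fst p $ snd p - B $ fst p $ snd p\<bar>})"
    by (auto simp: maxnorm_ge_iff)
  show ?thesis unfolding eq
    by (intro closed_INT ballI closed_UN finite_UNIV closed_Collect_le continuous_intros) auto
qed

lemma closed_entries: "closed {L::real^'d^'m. \<forall>i j. \<bar>L$i$j\<bar> \<le> C}"
  by (intro closed_Collect_all closed_Collect_le continuous_intros)

lemma bounded_entries: "bounded {L::real^'d^'m. \<forall>i j. \<bar>L$i$j\<bar> \<le> C}"
  unfolding bounded_iff
proof (intro exI ballI)
  fix L :: "real^'d^'m" assume "L \<in> {L::real^'d^'m. \<forall>i j. \<bar>L$i$j\<bar> \<le> C}"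
  hence e: "\<forall>i j. \<bar>L$i$j\<bar> \<le> C" by simp
  have "norm L \<le> (\<Sum>i\<in>UNIV. norm (L$i))" unfolding norm_vec_def by (rule L2_set_le_sum) simp
  also have "\<dots> \<le> (\<Sum>i\<in>(UNIV::'m set). \<Sum>j\<in>(UNIV::'d set). C)"
  proof (rule sum_mono)
    fix i
    have "norm (L$i) \<le> (\<Sum>j\<in>UNIV. \<bar>L$i$j\<bar>)" by (rule norm_le_l1_cart)
    also have "\<dots> \<le> (\<Sum>j\<in>(UNIV::'d set). C)" by (rule sum_mono) (use e in auto)
    finally show "norm (L$i) \<le> (\<Sum>j\<in>(UNIV::'d set). C)" .
  qed
  finally show "norm L \<le> (\<Sum>i\<in>(UNIV::'m set). \<Sum>j\<in>(UNIV::'d set). C)" .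
qed

lemma row_span_repr:
  fixes L :: "real^'d^'m"
  assumes "v \<in> span (rows L)"
  shows "\<exists>b::'m \<Rightarrow> real. \<forall>j. (\<Sum>i\<in>UNIV. b i * L $ i $ j) = v $ j"
proof -
  have "span (rows L) \<subseteq> range (\<lambda>x. transpose L *v x)"
  proof (rule span_minimal)
    show "rows L \<subseteq> range (\<lambda>x. transpose L *v x)"
    proof
      fix r assume "r \<in> rows L"
      then obtain i where "r = row i L" by (auto simp: rows_def)
      hence "r = transpose L *v axis i 1" by (simp add: matrix_vector_mult_basis)
      thus "r \<in> range (\<lambda>x. transpose L *v x)" by blast
    qed
    show "subspace (range (\<lambda>x. transpose L *v x))"
      by (intro linear_subspace_image subspace_UNIV) (rule matrix_vector_mul_linear)
  qed
  with assms obtain x where "v = transpose L *v x" by blast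
  hence "\<forall>j. (\<Sum>i\<in>UNIV. x $ i * L $ i $ j) = v $ j"
    by (simp add: matrix_vector_mult_def transpose_def mult.commute)
  thus ?thesis by blast
qed

theorem proposition3p1:
  fixes c C :: real
  assumes dm: "CARD('d) \<ge> CARD('m) + 1"
    and c: "c > 0" and C: "C > 0"
  shows "\<exists>\<delta> K. \<delta> > 0 \<and> K > 0 \<and>
    (\<forall>L :: real^'d^'m.
       surj (\<lambda>x. L *v x) \<and> mat_maxnorm L \<le> C \<and> mat_dist_set L V_rank \<ge> c \<longrightarrow>
       (\<exists>\<sigma>. is_rank_matrix \<delta> K L \<sigma>)) \<and>
    (\<forall>C1 > 0. \<exists>K1 > 0. \<forall>L :: real^'d^'m. \<forall>v :: real^'d.
       surj (\<lambda>x. L *v x) \<and> mat_maxnorm L \<le> C \<and> mat_dist_set L V_rank \<ge> c \<and>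
       v \<in> span (rows L) \<and> vec_maxnorm v \<le> C1 \<longrightarrow>
       (\<exists>a :: 'm \<Rightarrow> real. (\<forall>i. \<bar>a i\<bar> \<le> K1) \<and>
          (\<forall>j. (\<Sum>i\<in>UNIV. a i * L $ i $ j) = v $ j))) \<and>
    (\<forall>L :: real^'d^'m.
       surj (\<lambda>x. L *v x) \<and> mat_maxnorm L \<le> C \<and> mat_dist_set L V_rank \<ge> c \<and>
       mat_dist_set L V_rank_gbl \<ge> c \<longrightarrow>
       (\<forall>j. \<exists>\<sigma>. is_rank_matrix \<delta> K L \<sigma> \<and> j \<notin> range \<sigma>))"
proof -
  define S1 where "S1 = {L::real^'d^'m. \<forall>i j. \<bar>L$i$j\<bar> \<le> C} \<inter> {L. \<forall>B\<in>V_rank. c \<le> mat_maxnorm (L - B)}"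
  define S2 where "S2 = S1 \<inter> {L. \<forall>B\<in>V_rank_gbl. c \<le> mat_maxnorm (L - B)}"
  have cS1: "compact S1" unfolding S1_def compact_eq_bounded_closed
  proof
    show "bounded ({L::real^'d^'m. \<forall>i j. \<bar>L$i$j\<bar> \<le> C} \<inter> {L. \<forall>B\<in>V_rank. c \<le> mat_maxnorm (L - B)})"
      using bounded_entries[of C] by (rule bounded_subset) blast
    show "closed ({L::real^'d^'m. \<forall>i j. \<bar>L$i$j\<bar> \<le> C} \<inter> {L. \<forall>B\<in>V_rank. c \<le> mat_maxnorm (L - B)})"
      by (intro closed_Int closed_entries closed_far)
  qed
  have cS2: "compact S2" unfolding S2_def
    using cS1 closed_far by (intro compact_Int_closed)
  have inS1: "L \<in> S1" if "mat_maxnorm L \<le> C" "mat_dist_set L V_rank \<ge> c" for L :: "real^'d^'m"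
    using that dist_le unfolding S1_def by (auto simp: maxnorm_le_iff)
  have inS2: "L \<in> S2" if "mat_maxnorm L \<le> C" "mat_dist_set L V_rank \<ge> c"
     "mat_dist_set L V_rank_gbl \<ge> c" for L :: "real^'d^'m"
    using that dist_le inS1 unfolding S2_def by auto
  have far_not_in: "L \<notin> T" if "\<forall>B\<in>T. c \<le> mat_maxnorm (L - B)" for L :: "real^'d^'m" and T
  proof
    assume "L \<in> T"
    hence "c \<le> mat_maxnorm (L - L)" using that by blast
    moreover have "mat_maxnorm (L - L) \<le> 0" by (simp add: maxnorm_le_iff)
    ultimately show False using c by linarith
  qed
  have basis_eq: "{axis j 1 | j. j \<in> (UNIV::'d set)} = (Basis :: (real^'d) set)"
    by (auto simp: Basis_vec_def)
  have pos1: "\<forall>L\<in>S1. \<exists>\<sigma>\<in>{\<sigma>::'m\<Rightarrow>'d. inj \<sigma>}. det (col_submatrix L \<sigma>) \<noteq> 0"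
  proof
    fix L assume "L \<in> S1"
    hence "L \<notin> V_rank" using far_not_in unfolding S1_def by blast
    hence "rank L \<ge> CARD('m)" unfolding V_rank_def by simp
    hence "dim ((\<lambda>x. L *v x) ` span {axis j 1 | j. j \<in> (UNIV::'d set)}) \<ge> CARD('m)"
      unfolding basis_eq span_Basis rank_dim_range by simp
    then obtain \<sigma> where "inj \<sigma>" "det (col_submatrix L \<sigma>) \<noteq> 0" using lemA[of L UNIV] by blast
    thus "\<exists>\<sigma>\<in>{\<sigma>::'m\<Rightarrow>'d. inj \<sigma>}. det (col_submatrix L \<sigma>) \<noteq> 0" by blast
  qed
  obtain \<delta>1 where d1: "\<delta>1 > 0" "\<forall>L\<in>S1. \<exists>\<sigma>\<in>{\<sigma>::'m\<Rightarrow>'d. inj \<sigma>}. \<bar>det (col_submatrix L \<sigma>)\<bar> \<ge> \<delta>1"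
    using lemB[OF cS1 pos1] by blast
  have "\<forall>i::'d. \<exists>\<delta>>0. \<forall>L\<in>S2. \<exists>\<sigma>\<in>{\<sigma>::'m\<Rightarrow>'d. inj \<sigma> \<and> i \<notin> range \<sigma>}. \<bar>det (col_submatrix L \<sigma>)\<bar> \<ge> \<delta>"
  proof
    fix i :: 'd
    have "\<forall>L\<in>S2. \<exists>\<sigma>\<in>{\<sigma>::'m\<Rightarrow>'d. inj \<sigma> \<and> i \<notin> range \<sigma>}. det (col_submatrix L \<sigma>) \<noteq> 0"
    proof
      fix L assume "L \<in> S2"
      hence "\<forall>B\<in>V_rank_gbl. c \<le> mat_maxnorm (L - B)" unfolding S2_def by blast
      hence nL: "L \<notin> V_rank_gbl" by (rule far_not_in)
      have dimi: "dim ((\<lambda>x. L *v x) ` span {axis j 1 | j. j \<noteq> i}) \<ge> CARD('m)"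
      proof (rule ccontr)
        assume "\<not> dim ((\<lambda>x. L *v x) ` span {axis j 1 | j. j \<noteq> i}) \<ge> CARD('m)"
        hence "dim ((\<lambda>x. L *v x) ` span {axis j 1 | j. j \<noteq> i}) < CARD('m)" by linarith
        hence "L \<in> V_rank_gbl" unfolding V_rank_gbl_def mem_Collect_eq by (intro exI[of _ i])
        thus False using nL by contradiction
      qed
      have eqi: "{axis j 1 | j. j \<in> UNIV - {i}} = {axis j (1::real) | j. j \<noteq> i}" by blast
      have "dim ((\<lambda>x. L *v x) ` span {axis j 1 | j. j \<in> UNIV - {i}}) \<ge> CARD('m)"
        unfolding eqi by (rule dimi)
      then obtain \<sigma> where "inj \<sigma>" "range \<sigma> \<subseteq> UNIV - {i}" "det (col_submatrix L \<sigma>) \<noteq> 0"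
        using lemA[of L "UNIV - {i}"] by blast
      thus "\<exists>\<sigma>\<in>{\<sigma>::'m\<Rightarrow>'d. inj \<sigma> \<and> i \<notin> range \<sigma>}. det (col_submatrix L \<sigma>) \<noteq> 0" by blast
    qed
    thus "\<exists>\<delta>>0. \<forall>L\<in>S2. \<exists>\<sigma>\<in>{\<sigma>::'m\<Rightarrow>'d. inj \<sigma> \<and> i \<notin> range \<sigma>}. \<bar>det (col_submatrix L \<sigma>)\<bar> \<ge> \<delta>"
      by (rule lemB[OF cS2])
  qed
  then have "\<exists>d2. \<forall>i::'d. d2 i > 0 \<and> (\<forall>L\<in>S2. \<exists>\<sigma>\<in>{\<sigma>::'m\<Rightarrow>'d. inj \<sigma> \<and> i \<notin> range \<sigma>}. \<bar>det (col_submatrix L \<sigma>)\<bar> \<ge> d2 i)"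
    by (rule choice)
  then obtain d2 where d2a: "\<forall>i::'d. d2 i > 0 \<and> (\<forall>L\<in>S2. \<exists>\<sigma>\<in>{\<sigma>::'m\<Rightarrow>'d. inj \<sigma> \<and> i \<notin> range \<sigma>}. \<bar>det (col_submatrix L \<sigma>)\<bar> \<ge> d2 i)"
    by (erule exE)
  have d2: "\<And>i. d2 i > 0"
    "\<And>i. \<forall>L\<in>S2. \<exists>\<sigma>\<in>{\<sigma>::'m\<Rightarrow>'d. inj \<sigma> \<and> i \<notin> range \<sigma>}. \<bar>det (col_submatrix L \<sigma>)\<bar> \<ge> d2 i"
    using d2a by blast+
  define \<delta> where "\<delta> = min \<delta>1 (Min (range d2))"
  have dpos: "\<delta> > 0" unfolding \<delta>_def using d1(1) d2(1) by (simp add: Min_gr_iff)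
  have dle1: "\<delta> \<le> \<delta>1" unfolding \<delta>_def by simp
  have dle2: "\<delta> \<le> d2 i" for i
  proof -
    have "Min (range d2) \<le> d2 i" by (rule Min_le) auto
    thus ?thesis unfolding \<delta>_def by linarith
  qed
  define B where "B = max C 1"
  define K where "K = fact CARD('m) * B ^ CARD('m) / \<delta>"
  have Kpos: "K > 0" unfolding K_def B_def using dpos by simp
  have rm: "is_rank_matrix \<delta> K L \<sigma>" if "L \<in> S1" "inj \<sigma>" "\<bar>det (col_submatrix L \<sigma>)\<bar> \<ge> \<delta>" for L \<sigma>
  proof -
    have e: "\<forall>i j. \<bar>L$i$j\<bar> \<le> C" using that(1) unfolding S1_def by blast
    have "\<forall>i j. \<bar>col_submatrix L \<sigma> $ i $ j\<bar> \<le> B"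
    proof (intro allI)
      fix i j
      have "\<bar>L$i$(\<sigma> j)\<bar> \<le> C" using e by blast
      thus "\<bar>col_submatrix L \<sigma> $ i $ j\<bar> \<le> B" unfolding B_def col_submatrix_def by simp
    qed
    hence "mat_maxnorm (matrix_inv (col_submatrix L \<sigma>)) \<le> K"
      unfolding K_def using inv_bound[OF that(3) dpos] B_def by simp
    thus ?thesis using that unfolding is_rank_matrix_def by blast
  qed
  have P1: "\<forall>L :: real^'d^'m.
       surj (\<lambda>x. L *v x) \<and> mat_maxnorm L \<le> C \<and> mat_dist_set L V_rank \<ge> c \<longrightarrow>
       (\<exists>\<sigma>. is_rank_matrix \<delta> K L \<sigma>)"
  proof (intro allI impI)
    fix L :: "real^'d^'m"
    assume "surj (\<lambda>x. L *v x) \<and> mat_maxnorm L \<le> C \<and> mat_dist_set L V_rank \<ge> c"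
    hence L: "L \<in> S1" using inS1 by blast
    then obtain \<sigma> where "inj \<sigma>" "\<bar>det (col_submatrix L \<sigma>)\<bar> \<ge> \<delta>1" using d1 by blast
    thus "\<exists>\<sigma>. is_rank_matrix \<delta> K L \<sigma>" using rm[OF L] dle1 by force
  qed
  have P3: "\<forall>C1 > 0. \<exists>K1 > 0. \<forall>L :: real^'d^'m. \<forall>v :: real^'d.
       surj (\<lambda>x. L *v x) \<and> mat_maxnorm L \<le> C \<and> mat_dist_set L V_rank \<ge> c \<and>
       v \<in> span (rows L) \<and> vec_maxnorm v \<le> C1 \<longrightarrow>
       (\<exists>a :: 'm \<Rightarrow> real. (\<forall>i. \<bar>a i\<bar> \<le> K1) \<and>
          (\<forall>j. (\<Sum>i\<in>UNIV. a i * L $ i $ j) = v $ j))"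
  proof (intro allI impI)
    fix C1 :: real assume C1: "C1 > 0"
    define K1 where "K1 = real CARD('m) * (C1 * K)"
    have "K1 > 0" unfolding K1_def using C1 Kpos by simp
    moreover have "\<exists>a :: 'm \<Rightarrow> real. (\<forall>i. \<bar>a i\<bar> \<le> K1) \<and> (\<forall>j. (\<Sum>i\<in>UNIV. a i * L $ i $ j) = v $ j)"
      if h: "surj (\<lambda>x. L *v x) \<and> mat_maxnorm L \<le> C \<and> mat_dist_set L V_rank \<ge> c \<and>
       v \<in> span (rows L) \<and> vec_maxnorm v \<le> C1" for L :: "real^'d^'m" and v
    proof -
      obtain \<sigma> where rk: "is_rank_matrix \<delta> K L \<sigma>" using P1 h by blast
      define M where "M = col_submatrix L \<sigma>"
      define Mi where "Mi = matrix_inv M"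
      have "det M \<noteq> 0" using rk dpos unfolding is_rank_matrix_def M_def by auto
      hence "invertible M" using invertible_det_nz by blast
      hence MI: "M ** Mi = mat 1" unfolding Mi_def by (rule inv_right)
      have Mib: "\<forall>k i. \<bar>Mi $ k $ i\<bar> \<le> K"
        using rk unfolding is_rank_matrix_def M_def Mi_def maxnorm_le_iff by blast
      have vb: "\<forall>j. \<bar>v $ j\<bar> \<le> C1" using h vmaxnorm_le_iff by blast
      obtain b where b: "\<forall>j. (\<Sum>i\<in>UNIV. b i * L $ i $ j) = v $ j" using row_span_repr h by blast
      have bi: "b i = (\<Sum>k\<in>UNIV. v $ \<sigma> k * Mi $ k $ i)" for i
      proof -
        have "(\<Sum>k\<in>UNIV. v $ \<sigma> k * Mi $ k $ i) = (\<Sum>k\<in>UNIV. (\<Sum>l\<in>UNIV. b l * M $ l $ k) * Mi $ k $ i)"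
          using b by (simp add: M_def col_submatrix_def)
        also have "\<dots> = (\<Sum>l\<in>UNIV. b l * (\<Sum>k\<in>UNIV. M $ l $ k * Mi $ k $ i))"
          by (simp add: sum_distrib_left sum_distrib_right mult.assoc) (rule sum.swap)
        also have "\<dots> = (\<Sum>l\<in>UNIV. b l * (mat 1 :: real^'m^'m) $ l $ i)"
          using MI by (simp add: matrix_matrix_mult_def vec_eq_iff flip: MI)
        also have "\<dots> = b i" by (simp add: mat_def if_distrib cong: if_cong)
        finally show ?thesis by simp
      qed
      have "\<bar>b i\<bar> \<le> K1" for i
      proof -
        have "\<bar>b i\<bar> \<le> (\<Sum>k\<in>UNIV. \<bar>v $ \<sigma> k * Mi $ k $ i\<bar>)" unfolding bi by (rule sum_abs)
        also have "\<dots> \<le> (\<Sum>k\<in>(UNIV::'m set). C1 * K)"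
          by (rule sum_mono) (use vb Mib in \<open>auto simp: abs_mult intro!: mult_mono\<close>)
        finally show ?thesis unfolding K1_def by simp
      qed
      thus ?thesis using b by blast
    qed
    ultimately show "\<exists>K1 > 0. \<forall>L :: real^'d^'m. \<forall>v :: real^'d.
       surj (\<lambda>x. L *v x) \<and> mat_maxnorm L \<le> C \<and> mat_dist_set L V_rank \<ge> c \<and>
       v \<in> span (rows L) \<and> vec_maxnorm v \<le> C1 \<longrightarrow>
       (\<exists>a :: 'm \<Rightarrow> real. (\<forall>i. \<bar>a i\<bar> \<le> K1) \<and>
          (\<forall>j. (\<Sum>i\<in>UNIV. a i * L $ i $ j) = v $ j))" by blast
  qed
  have P4: "\<forall>L :: real^'d^'m.
       surj (\<lambda>x. L *v x) \<and> mat_maxnorm L \<le> C \<and> mat_dist_set L V_rank \<ge> c \<and>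
       mat_dist_set L V_rank_gbl \<ge> c \<longrightarrow>
       (\<forall>j. \<exists>\<sigma>. is_rank_matrix \<delta> K L \<sigma> \<and> j \<notin> range \<sigma>)"
  proof (intro allI impI)
    fix L :: "real^'d^'m" and j
    assume "surj (\<lambda>x. L *v x) \<and> mat_maxnorm L \<le> C \<and> mat_dist_set L V_rank \<ge> c \<and>
       mat_dist_set L V_rank_gbl \<ge> c"
    hence L: "L \<in> S2" using inS2 by blast
    hence L1: "L \<in> S1" unfolding S2_def by blast
    obtain \<sigma> where "inj \<sigma>" "j \<notin> range \<sigma>" "\<bar>det (col_submatrix L \<sigma>)\<bar> \<ge> d2 j" using d2(2) L by blast
    thus "\<exists>\<sigma>. is_rank_matrix \<delta> K L \<sigma> \<and> j \<notin> range \<sigma>" using rm[OF L1] dle2[of j] by force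
  qed
  show ?thesis
    apply (rule exI[of _ \<delta>])
    apply (rule exI[of _ K])
    using dpos Kpos P1 P3 P4 by (intro conjI)
qed
end
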